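(* Let $2\le G\le 8$. For $p\in(0,1)$, let $r_1,\dots,r_G$ be i.i.d. $\mathrm{Bernoulli}(p)$, $R=\sum_j r_j$, $\hat p=R/G$, $\hat A_i=r_i-\hat p$, $A_i=r_i-p$, $\mathcal S=\{1\le R\le G-1\}$. For an interval $I\subseteq[0,1]$ of positive length and an event $E$, set $\mathbb P(E\mid\mathcal S,\ p\in I):=\frac{1}{|I|}\int_I \mathbb P_p(E\mid \mathcal S)\,dp$, where $\mathbb P_p$ is the law for expected reward $p$ (i.e. $p$ is uniformly distributed on $I$). Then for every $i\in[G]$: \[ \begin{aligned} &\mathbb P(\hat A_i<A_i\mid\mathcal S,\ p<0.5)>0.63, &&\mathbb P(\hat A_i>A_i\mid\mathcal S,\ p>0.5)>0.63,\\ &\mathbb P(\hat A_i<A_i\mid\mathcal S,\ p<0.25)>0.78, &&\mathbb P(\hat A_i>A_i\mid\mathcal S,\ p>0.75)>0.78,\\ &\mathbb P(\hat A_i<A_i\mid\mathcal S,\ p<0.125)=1, &&\mathbb P(\hat A_i>A_i\mid\mathcal S,\ p>0.875)=1. \end{aligned} \]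
   Context: Binary-reward group setting: $\hat p$ is the group baseline, $\hat A_i$ the group-relative advantage, $A_i$ the expected advantage, $\mathcal S$ the non-degenerate event. The expected reward $p$ is assumed uniformly distributed over $[0,1]$, and conditioning on $p$ lying in a subinterval is understood as averaging the conditional probability given $\mathcal S$ uniformly over that subinterval. *)

theory Defs
  imports "HOL-Probability.Probability"
begin

text \<open>Law of the rewards r_0,...,r_{G-1}: i.i.d. Bernoulli(p); indices 0..G-1
  stand for the paper's 1..G. Outside the index range the outcome is False.\<close>
definition reward_pmf :: "nat \<Rightarrow> real \<Rightarrow> (nat \<Rightarrow> bool) pmf" where
  "reward_pmf G p = Pi_pmf {..<G} False (\<lambda>_. bernoulli_pmf p)"

definition total_reward :: "nat \<Rightarrow> (nat \<Rightarrow> bool) \<Rightarrow> real" where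
  "total_reward G r = (\<Sum>j<G. of_bool (r j))"

definition baseline :: "nat \<Rightarrow> (nat \<Rightarrow> bool) \<Rightarrow> real" where
  "baseline G r = total_reward G r / real G"

definition adv_hat :: "nat \<Rightarrow> (nat \<Rightarrow> bool) \<Rightarrow> nat \<Rightarrow> real" where
  "adv_hat G r i = of_bool (r i) - baseline G r"

definition adv :: "real \<Rightarrow> (nat \<Rightarrow> bool) \<Rightarrow> nat \<Rightarrow> real" where
  "adv p r i = of_bool (r i) - p"

definition nondeg :: "nat \<Rightarrow> (nat \<Rightarrow> bool) set" where
  "nondeg G = {r. 1 \<le> total_reward G r \<and> total_reward G r \<le> real G - 1}"

definition cond_prob_S :: "nat \<Rightarrow> real \<Rightarrow> (nat \<Rightarrow> bool) set \<Rightarrow> real" where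
  "cond_prob_S G p E =
     measure_pmf.prob (reward_pmf G p) (E \<inter> nondeg G) / measure_pmf.prob (reward_pmf G p) (nondeg G)"

definition avg_over :: "real \<Rightarrow> real \<Rightarrow> (real \<Rightarrow> real) \<Rightarrow> real" where
  "avg_over a b f = integral {a..b} f / (b - a)"

end

theory Submission imports Defs begin


definition bin :: "nat \<Rightarrow> real \<Rightarrow> nat \<Rightarrow> real" where
  "bin G p j = real (G choose j) * p^j * (1-p)^(G-j)"

lemma total_reward_card: "total_reward G r = real (card {x\<in>{..<G}. r x})"
proof -
  have "(\<Sum>j<G. of_bool (r j)) = (\<Sum>j\<in>{x\<in>{..<G}. r x}. (1::real))"
    by (intro sum.mono_neutral_cong_right) auto
  thus ?thesis unfolding total_reward_def by simp
qed

lemma prob_tr: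
  assumes "0 < p" "p < 1"
  shows "measure_pmf.prob (reward_pmf G p) {r. Q (total_reward G r)} =
         (\<Sum>j\<in>{j. j \<le> G \<and> Q (real j)}. bin G p j)"
proof -
  have eq: "binomial_pmf G p = map_pmf (\<lambda>f. card {x\<in>{..<G}. f x}) (reward_pmf G p)"
    unfolding reward_pmf_def by (rule binomial_pmf_altdef') (use assms in auto)
  have "measure_pmf.prob (reward_pmf G p) {r. Q (total_reward G r)} =
        measure_pmf.prob (binomial_pmf G p) {j. Q (real j)}"
    by (simp add: eq total_reward_card vimage_def)
  also have "\<dots> = measure_pmf.prob (binomial_pmf G p) ({j. Q (real j)} \<inter> set_pmf (binomial_pmf G p))"
    by (simp add: measure_Int_set_pmf)
  also have "{j. Q (real j)} \<inter> set_pmf (binomial_pmf G p) = {j. j \<le> G \<and> Q (real j)}"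
    using assms by auto
  also have "measure_pmf.prob (binomial_pmf G p) {j. j \<le> G \<and> Q (real j)} =
     (\<Sum>j\<in>{j. j \<le> G \<and> Q (real j)}. pmf (binomial_pmf G p) j)"
    by (rule measure_measure_pmf_finite) auto
  also have "\<dots> = (\<Sum>j\<in>{j. j \<le> G \<and> Q (real j)}. bin G p j)"
    using assms by (intro sum.cong) (auto simp: bin_def)
  finally show ?thesis .
qed

definition den :: "nat \<Rightarrow> real \<Rightarrow> real" where
  "den G p = (\<Sum>j\<in>{1..<G}. bin G p j)"

definition cfl :: "nat \<Rightarrow> real \<Rightarrow> real" where
  "cfl G p = (\<Sum>j\<in>{j\<in>{1..<G}. p * G < real j}. bin G p j) / den G p"

definition cfg :: "nat \<Rightarrow> real \<Rightarrow> real" where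
  "cfg G p = (\<Sum>j\<in>{j\<in>{1..<G}. real j < p * G}. bin G p j) / den G p"

lemma cond_lt:
  assumes "0 < p" "p < 1" "1 \<le> G"
  shows "cond_prob_S G p {r. adv_hat G r i < adv p r i} = cfl G p"
proof -
  have G: "real G > 0" using assms by simp
  have 1: "{r. adv_hat G r i < adv p r i} \<inter> nondeg G =
     {r. (\<lambda>x. 1 \<le> x \<and> x \<le> real G - 1 \<and> p * G < x) (total_reward G r)}"
    using G by (auto simp: adv_hat_def adv_def baseline_def nondeg_def field_simps)
  have 2: "nondeg G = {r. (\<lambda>x. 1 \<le> x \<and> x \<le> real G - 1) (total_reward G r)}"
    by (simp add: nondeg_def)
  have s1: "{j. j \<le> G \<and> 1 \<le> real j \<and> real j \<le> real G - 1 \<and> p * G < real j} = {j\<in>{1..<G}. p * G < real j}"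
    using assms by auto
  have s2: "{j. j \<le> G \<and> 1 \<le> real j \<and> real j \<le> real G - 1} = {1..<G}"
    using assms by auto
  show ?thesis
    unfolding cond_prob_S_def 1 
    apply (subst 2)
    apply (subst prob_tr[OF assms(1,2)])+
    by (simp only: s1 s2 cfl_def den_def)
qed

lemma cond_gt:
  assumes "0 < p" "p < 1" "1 \<le> G"
  shows "cond_prob_S G p {r. adv_hat G r i > adv p r i} = cfg G p"
proof -
  have G: "real G > 0" using assms by simp
  have 1: "{r. adv_hat G r i > adv p r i} \<inter> nondeg G =
     {r. (\<lambda>x. 1 \<le> x \<and> x \<le> real G - 1 \<and> x < p * G) (total_reward G r)}"
    using G by (auto simp: adv_hat_def adv_def baseline_def nondeg_def field_simps)
  have 2: "nondeg G = {r. (\<lambda>x. 1 \<le> x \<and> x \<le> real G - 1) (total_reward G r)}"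
    by (simp add: nondeg_def)
  have s1: "{j. j \<le> G \<and> 1 \<le> real j \<and> real j \<le> real G - 1 \<and> real j < p * G} = {j\<in>{1..<G}. real j < p * G}"
    using assms by auto
  have s2: "{j. j \<le> G \<and> 1 \<le> real j \<and> real j \<le> real G - 1} = {1..<G}"
    using assms by auto
  show ?thesis
    unfolding cond_prob_S_def 1 
    apply (subst 2)
    apply (subst prob_tr[OF assms(1,2)])+
    by (simp only: s1 s2 cfg_def den_def)
qed


definition hh :: "nat \<Rightarrow> nat \<Rightarrow> real \<Rightarrow> real" where
  "hh G k p = (\<Sum>j\<in>{Suc k..<G}. bin G p j) / den G p"

lemma bin_nonneg: "0 \<le> p \<Longrightarrow> p \<le> 1 \<Longrightarrow> 0 \<le> bin G p j"
  by (simp add: bin_def)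

lemma den_pos: assumes "0 < p" "p < 1" "2 \<le> G" shows "0 < den G p"
proof -
  have "0 < bin G p 1" using assms by (simp add: bin_def)
  also have "bin G p 1 \<le> den G p" unfolding den_def
    by (rule member_le_sum) (use assms in \<open>auto intro: bin_nonneg\<close>)
  finally show ?thesis .
qed

lemma piece_eq:
  assumes "0 < p" "p < 1" "real k \<le> p * G" "p * G < real k + 1"
  shows "cfl G p = hh G k p"
proof -
  have "{j\<in>{1..<G}. p * G < real j} = {Suc k..<G}"
  proof (intro set_eqI iffI)
    fix j assume "j \<in> {j\<in>{1..<G}. p * G < real j}"
    then have "real k < real j" "j < G" using assms by auto
    then show "j \<in> {Suc k..<G}" by simp
  next
    fix j assume "j \<in> {Suc k..<G}"
    then have "real k + 1 \<le> real j" "j < G" "1 \<le> j" by auto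
    then show "j \<in> {j\<in>{1..<G}. p * G < real j}" using assms by auto
  qed
  then show ?thesis by (simp add: cfl_def hh_def)
qed

lemma term_mono:
  assumes "0 < a" "a \<le> p" "p < 1" "j < m" "m \<le> G"
  shows "bin G a m * bin G p j \<le> bin G p m * bin G a j"
proof -
  obtain d where d: "m = j + d" using assms by (metis less_imp_add_positive)
  obtain e where e: "G = m + e" using assms by (metis le_add_diff_inverse)
  have Gm: "G - m = e" using e by simp
  have Gj: "G - j = e + d" using e d by simp
  define X where "X = a^j * p^j * (1-a)^e * (1-p)^e"
  have X: "0 \<le> X" unfolding X_def using assms by simp
  have l: "a^m * (1-a)^(G-m) * (p^j * (1-p)^(G-j)) = X * (a*(1-p))^d"
    unfolding Gm Gj unfolding d X_def by (simp add: power_add power_mult_distrib mult_ac)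
  have r: "p^m * (1-p)^(G-m) * (a^j * (1-a)^(G-j)) = X * (p*(1-a))^d"
    unfolding Gm Gj unfolding d X_def by (simp add: power_add power_mult_distrib mult_ac)
  have "a*(1-p) \<le> p*(1-a)" using assms by (simp add: algebra_simps)
  then have "(a*(1-p))^d \<le> (p*(1-a))^d"
    by (intro power_mono) (use assms in auto)
  then have "a^m * (1-a)^(G-m) * (p^j * (1-p)^(G-j)) \<le> p^m * (1-p)^(G-m) * (a^j * (1-a)^(G-j))"
    unfolding l r using X by (simp add: mult_left_mono)
  then have "real (G choose m) * real (G choose j) * (a^m * (1-a)^(G-m) * (p^j * (1-p)^(G-j)))
     \<le> real (G choose m) * real (G choose j) * (p^m * (1-p)^(G-m) * (a^j * (1-a)^(G-j)))"
    by (intro mult_left_mono) auto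
  then show ?thesis by (simp add: bin_def algebra_simps)
qed

lemma hh_mono:
  assumes "0 < a" "a \<le> p" "p < 1" "2 \<le> G"
  shows "hh G k a \<le> hh G k p"
proof -
  define A where "A q = (\<Sum>j\<in>{1..<G} \<inter> {..k}. bin G q j)" for q
  define B where "B q = (\<Sum>j\<in>{Suc k..<G}. bin G q j)" for q
  have split: "den G q = A q + B q" for q
  proof -
    have "{1..<G} = ({1..<G} \<inter> {..k}) \<union> {Suc k..<G}" by auto
    then have "den G q = (\<Sum>j\<in>({1..<G} \<inter> {..k}) \<union> {Suc k..<G}. bin G q j)"
      unfolding den_def by simp
    also have "\<dots> = A q + B q" unfolding A_def B_def
      by (rule sum.union_disjoint) auto
    finally show ?thesis .
  qed
  have pa: "0 < a" "a < 1" "0 < p" "p < 1" using assms by auto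
  have Apos: "0 \<le> A q" "0 \<le> B q" if "0 < q" "q < 1" for q
    unfolding A_def B_def using that by (auto intro!: sum_nonneg bin_nonneg)
  have key: "B a * A p \<le> B p * A a"
  proof -
    have "B a * A p = (\<Sum>m\<in>{Suc k..<G}. \<Sum>j\<in>{1..<G} \<inter> {..k}. bin G a m * bin G p j)"
      unfolding A_def B_def by (rule sum_product)
    also have "\<dots> \<le> (\<Sum>m\<in>{Suc k..<G}. \<Sum>j\<in>{1..<G} \<inter> {..k}. bin G p m * bin G a j)"
      by (intro sum_mono term_mono) (use assms in auto)
    also have "\<dots> = B p * A a"
      unfolding A_def B_def by (rule sum_product[symmetric])
    finally show ?thesis .
  qed
  have da: "0 < A a + B a" and dp: "0 < A p + B p"
    using den_pos[OF pa(1,2) assms(4)] den_pos[OF pa(3,4) assms(4)] split by auto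
  have "B a / (A a + B a) \<le> B p / (A p + B p)"
    using key da dp by (simp add: divide_simps algebra_simps)
  then show ?thesis unfolding hh_def split B_def[symmetric] .
qed

lemma hh_cont:
  assumes "0 < c" "d < 1" "2 \<le> G"
  shows "continuous_on {c..d} (hh G k)"
proof -
  have nz: "\<forall>p\<in>{c..d}. den G p \<noteq> 0"
  proof
    fix p assume "p \<in> {c..d}"
    then have "0 < den G p" using assms by (intro den_pos) auto
    then show "den G p \<noteq> 0" by simp
  qed
  have "continuous_on {c..d} (\<lambda>p. (\<Sum>j\<in>{Suc k..<G}. bin G p j) / den G p)"
    using nz unfolding den_def bin_def
    by (intro continuous_intros) auto
  then show ?thesis unfolding hh_def[abs_def] .
qed

lemma sym:
  assumes "0 < p" "p < 1" "1 \<le> G"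
  shows "cfg G p = cfl G (1 - p)"
proof -
  have b: "bin G (1-p) j = bin G p (G - j)" if "j \<le> G" for j
    using that by (simp add: bin_def binomial_symmetric[OF that] mult.commute mult.left_commute)
  have dd: "den G (1-p) = den G p"
    unfolding den_def
    by (rule sum.reindex_bij_witness[of _ "\<lambda>j. G - j" "\<lambda>j. G - j"]) (auto simp: b)
  have nn: "(\<Sum>j\<in>{j\<in>{1..<G}. (1-p) * G < real j}. bin G (1-p) j) =
            (\<Sum>j\<in>{j\<in>{1..<G}. real j < p * G}. bin G p j)"
    by (rule sum.reindex_bij_witness[of _ "\<lambda>j. G - j" "\<lambda>j. G - j"])
       (auto simp: b of_nat_diff algebra_simps)
  show ?thesis unfolding cfl_def cfg_def dd nn ..
qed


lemma cell_k:
  fixes c d :: real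
  assumes G: "2 \<le> G" and f: "\<And>p. 0 < p \<Longrightarrow> p < 1 \<Longrightarrow> f p = cfl G p"
    and "0 < c" "c < d" "d < 1" "real k \<le> c * G" "d * G \<le> real k + 1"
  shows "\<exists>I. (f has_integral I) {c..d} \<and> (d - c) * hh G k c \<le> I"
proof -
  have hi: "(hh G k has_integral integral {c..d} (hh G k)) {c..d}"
    using integrable_continuous_interval[OF hh_cont[OF assms(3,5) G]] by (simp add: has_integral_integral)
  have "(f has_integral integral {c..d} (hh G k)) {c..d}"
  proof (rule has_integral_spike_finite[of "{d}"])
    fix x assume x: "x \<in> {c..d} - {d}"
    have Gp: "real G > 0" using G by simp
    have "x * G < d * G" using x Gp by (intro mult_strict_right_mono) auto
    moreover have "c * G \<le> x * G" using x Gp by (intro mult_right_mono) auto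
    ultimately have "real k \<le> x * G" "x * G < real k + 1"
      using assms by linarith+
    moreover have "0 < x" "x < 1" using assms x by auto
    ultimately have "0 < x" "x < 1" "real k \<le> x * G" "x * G < real k + 1" by auto
    then show "f x = hh G k x" using f piece_eq by simp
  qed (use hi in auto)
  moreover have "(d - c) * hh G k c \<le> integral {c..d} (hh G k)"
  proof -
    have "((\<lambda>x. hh G k c) has_integral (d - c) * hh G k c) {c..d}"
      using has_integral_const_real[of "hh G k c" c d] assms by simp
    moreover have "hh G k c \<le> hh G k x" if "x \<in> {c..d}" for x
      using that assms by (intro hh_mono) auto
    ultimately show ?thesis using has_integral_le[OF _ hi] by blast
  qed
  ultimately show ?thesis by blast
qed

lemma cell_0:
  fixes c d :: real
  assumes G: "2 \<le> G" and f: "\<And>p. 0 < p \<Longrightarrow> p < 1 \<Longrightarrow> f p = cfl G p"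
    and "0 \<le> c" "c < d" "d * G \<le> 1"
  shows "(f has_integral (d - c)) {c..d}"
proof (rule has_integral_spike_finite[of "{0, d}"])
  have "((\<lambda>x. 1::real) has_integral (d - c) * 1) {c..d}"
    using has_integral_const_real[of "1::real" c d] assms by simp
  then show "((\<lambda>x. 1::real) has_integral (d - c)) {c..d}" by simp
next
  fix x assume x: "x \<in> {c..d} - {0, d}"
  have Gr: "real G \<ge> 2" using G by simp
  have "d \<le> 1 / G" using assms Gr by (simp add: field_simps)
  also have "\<dots> < 1" using Gr by simp
  finally have d1: "d < 1" .
  have "x * G < d * G" using x Gr by (intro mult_strict_right_mono) auto
  then have "x * G < 1" using assms by linarith
  moreover have "0 < x" "x < 1" using x assms d1 by auto
  ultimately have "0 < x" "x < 1" "x * G < 1" by auto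
  then have "f x = hh G 0 x" using f piece_eq[of x 0 G] by simp
  also have "\<dots> = 1" unfolding hh_def den_def[symmetric]
    using den_pos[OF \<open>0 < x\<close> \<open>x < 1\<close> G] by (simp add: den_def)
  finally show "f x = 1" .
qed auto

lemma comb:
  fixes f :: "real \<Rightarrow> real"
  assumes "0 < N" "\<And>i. i < n \<Longrightarrow> (f has_integral I i) {real i / N..real (Suc i) / N}"
  shows "(f has_integral (\<Sum>i<n. I i)) {0..real n / N}"
  using assms(2)
proof (induction n)
  case 0
  then show ?case using has_integral_refl(2)[of f 0] by simp
next
  case (Suc n)
  have "(f has_integral (\<Sum>i<n. I i) + I n) {0..real (Suc n) / N}"
    by (rule has_integral_combine[where c="real n / N"])
       (use Suc assms(1) in \<open>auto simp: divide_right_mono\<close>)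
  then show ?case by simp
qed

lemma reflect01:
  fixes f :: "real \<Rightarrow> real" and T :: real
  assumes "(f has_integral I) {0..T}" "0 \<le> T"
  shows "((\<lambda>x. f (1 - x)) has_integral I) {1 - T..1}"
proof -
  have a: "(f has_integral I) (cbox 0 T)" by (metis assms(1) interval_cbox)
  have "((\<lambda>x. f ((-1) *\<^sub>R x + 1)) has_integral (1 / \<bar>-1\<bar> ^ DIM(real)) *\<^sub>R I)
          ((\<lambda>x. (1 / -1) *\<^sub>R x + - ((1 / -1) *\<^sub>R 1)) ` cbox 0 T)"
    by (rule has_integral_affinity[OF a]) auto
  moreover have "(\<lambda>x::real. (1 / -1) *\<^sub>R x + - ((1 / -1) *\<^sub>R 1)) ` cbox 0 T = {1 - T..1}"
  proof -
    have "(\<lambda>x::real. (1 / -1) *\<^sub>R x + - ((1 / -1) *\<^sub>R 1)) = (\<lambda>x. 1 - x)" by auto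
    moreover have "(\<lambda>x::real. 1 - x) ` {0..T} = {1 - T..1}"
      by (auto simp: image_iff intro!: bexI[where x="1 - _"])
    ultimately show ?thesis by simp
  qed
  ultimately show ?thesis by simp
qed


definition bn :: "nat \<Rightarrow> nat \<Rightarrow> nat \<Rightarrow> nat \<Rightarrow> nat" where
  "bn G N u j = (G choose j) * u^j * (N-u)^(G-j)"
definition nu :: "nat \<Rightarrow> nat \<Rightarrow> nat \<Rightarrow> nat \<Rightarrow> nat" where
  "nu G N k u = (\<Sum>j\<in>{Suc k..<G}. bn G N u j)"
definition de :: "nat \<Rightarrow> nat \<Rightarrow> nat \<Rightarrow> nat" where
  "de G N u = (\<Sum>j\<in>{1..<G}. bn G N u j)"

lemma bin_nat:
  assumes "0 < N" "u \<le> N" "j \<le> G"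
  shows "bin G (real u / real N) j = real (bn G N u j) / real N ^ G"
proof -
  have 1: "1 - real u / real N = real (N - u) / real N"
    using assms by (simp add: of_nat_diff field_simps)
  have "real N ^ G = real N ^ j * real N ^ (G - j)"
    using assms by (simp add: power_add[symmetric])
  then show ?thesis
    unfolding bin_def bn_def 1 using assms by (simp add: power_divide field_simps)
qed

lemma hh_nat:
  assumes "0 < N" "u \<le> N"
  shows "hh G k (real u / real N) = real (nu G N k u) / real (de G N u)"
proof -
  have s1: "(\<Sum>j\<in>{Suc k..<G}. bin G (real u / real N) j) = real (nu G N k u) / real N ^ G"
    unfolding nu_def of_nat_sum sum_divide_distrib
    by (intro sum.cong refl bin_nat) (use assms in auto)
  have s2: "den G (real u / real N) = real (de G N u) / real N ^ G"
    unfolding de_def den_def of_nat_sum sum_divide_distrib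
    by (intro sum.cong refl bin_nat) (use assms in auto)
  show ?thesis unfolding hh_def s1 s2 using assms by simp
qed

fun chk :: "nat \<Rightarrow> nat \<Rightarrow> nat \<Rightarrow> nat \<Rightarrow> nat list \<Rightarrow> bool" where
  "chk G M D u [] = True"
| "chk G M D u (q # qs) = (q * de G (G*M) u \<le> D * nu G (G*M) (u div M) u \<and> chk G M D (Suc u) qs)"

lemma chk_nth: "chk G M D u qs \<Longrightarrow> t < length qs \<Longrightarrow>
   qs ! t * de G (G*M) (u+t) \<le> D * nu G (G*M) ((u+t) div M) (u+t)"
proof (induction qs arbitrary: u t)
  case Nil then show ?case by simp
next
  case (Cons q qs)
  show ?case
  proof (cases t)
    case 0 then show ?thesis using Cons by simp
  next
    case (Suc t')
    then show ?thesis using Cons.IH[of "Suc u" t'] Cons.prems by simp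
  qed
qed

lemma main_lower:
  fixes f :: "real \<Rightarrow> real"
  assumes G: "2 \<le> G" and f: "\<And>p. 0 < p \<Longrightarrow> p < 1 \<Longrightarrow> f p = cfl G p"
    and M: "1 \<le> M" and n: "M \<le> n" "2 * n \<le> G * M" and D: "0 < D"
    and len: "length qs = n - M" and ck: "chk G M D M qs"
  shows "\<exists>I. (f has_integral I) {0..real n / real (G * M)} \<and>
             (real M + real (sum_list qs) / real D) / real (G * M) \<le> I"
proof -
  define N where "N = G * M"
  have N0: "0 < N" using G M by (simp add: N_def)
  have Nr: "real N = real G * real M" by (simp add: N_def)
  define lb where "lb i = (if i < M then 1 / real N else real (qs ! (i - M)) / (real D * real N))" for i
  have cell: "\<exists>I. (f has_integral I) {real i / real N..real (Suc i) / real N} \<and> lb i \<le> I"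
    if i: "i < n" for i
  proof (cases "i < M")
    case True
    have "(f has_integral (real (Suc i) / real N - real i / real N)) {real i / real N..real (Suc i) / real N}"
    proof (rule cell_0[OF G f])
      have "real (Suc i) \<le> real M" using True by simp
      then have "real G * real (Suc i) \<le> real G * real M" by (intro mult_left_mono) auto
      then show "real (Suc i) / real N * real G \<le> 1"
        using G M by (simp add: Nr field_simps)
    qed (use N0 in \<open>auto simp: divide_right_mono divide_strict_right_mono\<close>)
    moreover have "real (Suc i) / real N - real i / real N = lb i"
      using True N0 by (simp add: lb_def diff_divide_distrib[symmetric])
    ultimately show ?thesis by auto
  next
    case False
    define k where "k = i div M"
    have e1: "i = k * M + i mod M" by (simp add: k_def)
    have e2: "i mod M < M" using M by simp
    have e3: "(k + 1) * M = k * M + M" by simp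
    have kM: "k * M \<le> i" "i < (k + 1) * M" using e1 e2 e3 by linarith+
    have Gr: "real G > 0" "real M > 0" using G M by auto
    have "\<exists>I. (f has_integral I) {real i / real N..real (Suc i) / real N} \<and>
            (real (Suc i) / real N - real i / real N) * hh G k (real i / real N) \<le> I"
    proof (rule cell_k[OF G f])
      show "0 < real i / real N" using False M N0 by auto
      show "real i / real N < real (Suc i) / real N" using N0 by (simp add: divide_strict_right_mono)
      have "2 * Suc i \<le> 2 * n" using i by simp
      then have "real (Suc i) < real N" using n(2) i unfolding N_def by linarith
      then show "real (Suc i) / real N < 1" using N0 by simp
      have "real k * real M \<le> real i" using kM(1) by (metis of_nat_le_iff of_nat_mult)
      then show "real k \<le> real i / real N * real G" using Gr by (simp add: Nr field_simps)
      have "real (Suc i) \<le> (real k + 1) * real M" using kM(2)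
        by (metis Suc_leI of_nat_1 of_nat_add of_nat_le_iff of_nat_mult)
      then have "real G * real (Suc i) \<le> real G * ((real k + 1) * real M)" by (intro mult_left_mono) auto
      then show "real (Suc i) / real N * real G \<le> real k + 1" using Gr by (simp add: Nr field_simps)
    qed
    moreover have "lb i \<le> (real (Suc i) / real N - real i / real N) * hh G k (real i / real N)"
    proof -
      have hn: "hh G k (real i / real N) = real (nu G N k i) / real (de G N i)"
        using i n N0 by (intro hh_nat) (auto simp: N_def)
      have t: "i - M < length qs" using i False len by simp
      have c: "qs ! (i - M) * de G N i \<le> D * nu G N k i"
        using chk_nth[OF ck t] False unfolding N_def k_def by simp
      have dpos: "0 < de G N i"
      proof -
        have iN: "i < N" using i n unfolding N_def by linarith
        then have "real i < real N" by simp
        then have "0 < real i / real N" "real i / real N < 1" using False M N0 by auto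
        then have "0 < den G (real i / real N)" using den_pos G by blast
        moreover have "den G (real i / real N) = real (de G N i) / real N ^ G"
          unfolding de_def den_def of_nat_sum sum_divide_distrib
          by (intro sum.cong refl bin_nat) (use N0 i n in \<open>auto simp: N_def\<close>)
        ultimately show ?thesis using N0 by (simp add: zero_less_divide_iff)
      qed
      have "real (qs ! (i - M)) * real (de G N i) \<le> real D * real (nu G N k i)"
        using c by (metis of_nat_le_iff of_nat_mult)
      then have "real (qs ! (i - M)) / real D \<le> real (nu G N k i) / real (de G N i)"
        using dpos D by (simp add: field_simps)
      then have "real (qs ! (i - M)) / real D * (1 / real N) \<le> real (nu G N k i) / real (de G N i) * (1 / real N)"
        by (rule mult_right_mono) simp
      moreover have "real (Suc i) / real N - real i / real N = 1 / real N"
        by (simp add: diff_divide_distrib[symmetric])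
      moreover have "lb i = real (qs ! (i - M)) / real D * (1 / real N)"
        using False by (simp add: lb_def)
      ultimately show ?thesis unfolding hn by (simp add: mult.commute)
    qed
    ultimately show ?thesis by force
  qed
  have ii: "\<forall>i<n. (f has_integral integral {real i / real N..real (Suc i) / real N} f)
              {real i / real N..real (Suc i) / real N} \<and>
            lb i \<le> integral {real i / real N..real (Suc i) / real N} f"
  proof (intro allI impI)
    fix i assume "i < n"
    then obtain I where I: "(f has_integral I) {real i / real N..real (Suc i) / real N}" "lb i \<le> I"
      using cell by blast
    have "integral {real i / real N..real (Suc i) / real N} f = I" using I(1) by (rule integral_unique)
    then show "(f has_integral integral {real i / real N..real (Suc i) / real N} f)
              {real i / real N..real (Suc i) / real N} \<and>
            lb i \<le> integral {real i / real N..real (Suc i) / real N} f" using I by simp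
  qed
  have hi: "(f has_integral (\<Sum>i<n. integral {real i / real N..real (Suc i) / real N} f)) {0..real n / real N}"
    by (rule comb) (use N0 ii in auto)
  have "(\<Sum>i<n. lb i) \<le> (\<Sum>i<n. integral {real i / real N..real (Suc i) / real N} f)"
    using ii by (intro sum_mono) auto
  moreover have "(\<Sum>i<n. lb i) = (real M + real (sum_list qs) / real D) / real N"
  proof -
    have "{..<n} = {..<M} \<union> {M..<n}" using n by auto
    then have "(\<Sum>i<n. lb i) = (\<Sum>i<M. lb i) + (\<Sum>i\<in>{M..<n}. lb i)"
      by (metis finite_lessThan finite_atLeastLessThan sum.union_disjoint ivl_disj_int_one(2))
    also have "(\<Sum>i<M. lb i) = real M / real N" by (simp add: lb_def)
    also have "(\<Sum>i\<in>{M..<n}. lb i) = (\<Sum>t<n - M. real (qs ! t) / (real D * real N))"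
      by (rule sum.reindex_bij_witness[of _ "\<lambda>t. t + M" "\<lambda>i. i - M"]) (auto simp: lb_def)
    also have "\<dots> = real (sum_list qs) / (real D * real N)"
      by (simp add: sum_list_sum_nth len sum_divide_distrib atLeast0LessThan)
    finally show ?thesis using N0 D by (simp add: field_simps)
  qed
  ultimately show ?thesis using hi unfolding N_def by auto
qed


lemma chs:
  "(2::nat) choose 0 = 1"
  "(2::nat) choose 1 = 2"
  "(2::nat) choose 2 = 1"
  "(3::nat) choose 0 = 1"
  "(3::nat) choose 1 = 3"
  "(3::nat) choose 2 = 3"
  "(3::nat) choose 3 = 1"
  "(4::nat) choose 0 = 1"
  "(4::nat) choose 1 = 4"
  "(4::nat) choose 2 = 6"
  "(4::nat) choose 3 = 4"
  "(4::nat) choose 4 = 1"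
  "(5::nat) choose 0 = 1"
  "(5::nat) choose 1 = 5"
  "(5::nat) choose 2 = 10"
  "(5::nat) choose 3 = 10"
  "(5::nat) choose 4 = 5"
  "(5::nat) choose 5 = 1"
  "(6::nat) choose 0 = 1"
  "(6::nat) choose 1 = 6"
  "(6::nat) choose 2 = 15"
  "(6::nat) choose 3 = 20"
  "(6::nat) choose 4 = 15"
  "(6::nat) choose 5 = 6"
  "(6::nat) choose 6 = 1"
  "(7::nat) choose 0 = 1"
  "(7::nat) choose 1 = 7"
  "(7::nat) choose 2 = 21"
  "(7::nat) choose 3 = 35"
  "(7::nat) choose 4 = 35"
  "(7::nat) choose 5 = 21"
  "(7::nat) choose 6 = 7"
  "(7::nat) choose 7 = 1"
  "(8::nat) choose 0 = 1"
  "(8::nat) choose 1 = 8"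
  "(8::nat) choose 2 = 28"
  "(8::nat) choose 3 = 56"
  "(8::nat) choose 4 = 70"
  "(8::nat) choose 5 = 56"
  "(8::nat) choose 6 = 28"
  "(8::nat) choose 7 = 8"
  "(8::nat) choose 8 = 1"
  by (simp_all add: numeral_eq_Suc)

lemma case_2_half: "\<exists>I. ((\<lambda>p. cond_prob_S 2 p {r. adv_hat 2 r i < adv p r i}) has_integral I) {0..1/2} \<and> (63/100::real) < I / (1/2)"
proof -
  have "((\<lambda>p. cond_prob_S 2 p {r. adv_hat 2 r i < adv p r i}) has_integral (1/2 - 0)) {0..1/2}"
    by (rule cell_0) (use cond_lt in auto)
  then show ?thesis by force
qed

lemma case_2_quarter: "\<exists>I. ((\<lambda>p. cond_prob_S 2 p {r. adv_hat 2 r i < adv p r i}) has_integral I) {0..1/4} \<and> (78/100::real) < I / (1/4)"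
proof -
  have "((\<lambda>p. cond_prob_S 2 p {r. adv_hat 2 r i < adv p r i}) has_integral (1/4 - 0)) {0..1/4}"
    by (rule cell_0) (use cond_lt in auto)
  then show ?thesis by force
qed

lemma case_3_half: "\<exists>I. ((\<lambda>p. cond_prob_S 3 p {r. adv_hat 3 r i < adv p r i}) has_integral I) {0..1/2} \<and> (63/100::real) < I / (1/2)"
proof -
  have ck: "chk 3 4 1000000 4 [333333, 416666]"
    by (simp add: nu_def de_def bn_def atLeastLessThan_nat_numeral chs)
  have "\<exists>I. ((\<lambda>p. cond_prob_S 3 p {r. adv_hat 3 r i < adv p r i}) has_integral I) {0..real 6 / real (3 * 4)} \<and>
     (real 4 + real (sum_list [333333, 416666]) / real 1000000) / real (3 * 4) \<le> I"
    by (rule main_lower[OF _ _ _ _ _ _ _ ck]) (use cond_lt in auto)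
  then obtain I where I: "((\<lambda>p. cond_prob_S 3 p {r. adv_hat 3 r i < adv p r i}) has_integral I) {0..real 6 / real (3 * 4)}"
     "(real 4 + real (sum_list [333333, 416666]) / real 1000000) / real (3 * 4) \<le> I" by blast
  have e: "real 6 / real (3 * 4) = (1/2::real)" by simp
  have "(63/100::real) < ((real 4 + real (sum_list [333333, 416666]) / real 1000000) / real (3 * 4)) / (1/2)" by simp
  also have "\<dots> \<le> I / (1/2)" by (rule divide_right_mono[OF I(2)]) simp
  finally show ?thesis using I(1) unfolding e by blast
qed

lemma case_3_quarter: "\<exists>I. ((\<lambda>p. cond_prob_S 3 p {r. adv_hat 3 r i < adv p r i}) has_integral I) {0..1/4} \<and> (78/100::real) < I / (1/4)"
proof -
  have "((\<lambda>p. cond_prob_S 3 p {r. adv_hat 3 r i < adv p r i}) has_integral (1/4 - 0)) {0..1/4}"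
    by (rule cell_0) (use cond_lt in auto)
  then show ?thesis by force
qed

lemma case_4_half: "\<exists>I. ((\<lambda>p. cond_prob_S 4 p {r. adv_hat 4 r i < adv p r i}) has_integral I) {0..1/2} \<and> (63/100::real) < I / (1/2)"
proof -
  have ck: "chk 4 4 1000000 4 [379310, 470459, 557522, 639198]"
    by (simp add: nu_def de_def bn_def atLeastLessThan_nat_numeral chs)
  have "\<exists>I. ((\<lambda>p. cond_prob_S 4 p {r. adv_hat 4 r i < adv p r i}) has_integral I) {0..real 8 / real (4 * 4)} \<and>
     (real 4 + real (sum_list [379310, 470459, 557522, 639198]) / real 1000000) / real (4 * 4) \<le> I"
    by (rule main_lower[OF _ _ _ _ _ _ _ ck]) (use cond_lt in auto)
  then obtain I where I: "((\<lambda>p. cond_prob_S 4 p {r. adv_hat 4 r i < adv p r i}) has_integral I) {0..real 8 / real (4 * 4)}"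
     "(real 4 + real (sum_list [379310, 470459, 557522, 639198]) / real 1000000) / real (4 * 4) \<le> I" by blast
  have e: "real 8 / real (4 * 4) = (1/2::real)" by simp
  have "(63/100::real) < ((real 4 + real (sum_list [379310, 470459, 557522, 639198]) / real 1000000) / real (4 * 4)) / (1/2)" by simp
  also have "\<dots> \<le> I / (1/2)" by (rule divide_right_mono[OF I(2)]) simp
  finally show ?thesis using I(1) unfolding e by blast
qed

lemma case_4_quarter: "\<exists>I. ((\<lambda>p. cond_prob_S 4 p {r. adv_hat 4 r i < adv p r i}) has_integral I) {0..1/4} \<and> (78/100::real) < I / (1/4)"
proof -
  have "((\<lambda>p. cond_prob_S 4 p {r. adv_hat 4 r i < adv p r i}) has_integral (1/4 - 0)) {0..1/4}"
    by (rule cell_0) (use cond_lt in auto)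
  then show ?thesis by force
qed

lemma case_5_half: "\<exists>I. ((\<lambda>p. cond_prob_S 5 p {r. adv_hat 5 r i < adv p r i}) has_integral I) {0..1/2} \<and> (63/100::real) < I / (1/2)"
proof -
  have ck: "chk 5 4 1000000 4 [390476, 480769, 565822, 644498, 336842, 417109]"
    by (simp add: nu_def de_def bn_def atLeastLessThan_nat_numeral chs)
  have "\<exists>I. ((\<lambda>p. cond_prob_S 5 p {r. adv_hat 5 r i < adv p r i}) has_integral I) {0..real 10 / real (5 * 4)} \<and>
     (real 4 + real (sum_list [390476, 480769, 565822, 644498, 336842, 417109]) / real 1000000) / real (5 * 4) \<le> I"
    by (rule main_lower[OF _ _ _ _ _ _ _ ck]) (use cond_lt in auto)
  then obtain I where I: "((\<lambda>p. cond_prob_S 5 p {r. adv_hat 5 r i < adv p r i}) has_integral I) {0..real 10 / real (5 * 4)}"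
     "(real 4 + real (sum_list [390476, 480769, 565822, 644498, 336842, 417109]) / real 1000000) / real (5 * 4) \<le> I" by blast
  have e: "real 10 / real (5 * 4) = (1/2::real)" by simp
  have "(63/100::real) < ((real 4 + real (sum_list [390476, 480769, 565822, 644498, 336842, 417109]) / real 1000000) / real (5 * 4)) / (1/2)" by simp
  also have "\<dots> \<le> I / (1/2)" by (rule divide_right_mono[OF I(2)]) simp
  finally show ?thesis using I(1) unfolding e by blast
qed

lemma case_5_quarter: "\<exists>I. ((\<lambda>p. cond_prob_S 5 p {r. adv_hat 5 r i < adv p r i}) has_integral I) {0..1/4} \<and> (78/100::real) < I / (1/4)"
proof -
  have ck: "chk 5 4 1000000 4 [390476]"
    by (simp add: nu_def de_def bn_def atLeastLessThan_nat_numeral chs)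
  have "\<exists>I. ((\<lambda>p. cond_prob_S 5 p {r. adv_hat 5 r i < adv p r i}) has_integral I) {0..real 5 / real (5 * 4)} \<and>
     (real 4 + real (sum_list [390476]) / real 1000000) / real (5 * 4) \<le> I"
    by (rule main_lower[OF _ _ _ _ _ _ _ ck]) (use cond_lt in auto)
  then obtain I where I: "((\<lambda>p. cond_prob_S 5 p {r. adv_hat 5 r i < adv p r i}) has_integral I) {0..real 5 / real (5 * 4)}"
     "(real 4 + real (sum_list [390476]) / real 1000000) / real (5 * 4) \<le> I" by blast
  have e: "real 5 / real (5 * 4) = (1/4::real)" by simp
  have "(78/100::real) < ((real 4 + real (sum_list [390476]) / real 1000000) / real (5 * 4)) / (1/4)" by simp
  also have "\<dots> \<le> I / (1/4)" by (rule divide_right_mono[OF I(2)]) simp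
  finally show ?thesis using I(1) unfolding e by blast
qed

lemma case_6_half: "\<exists>I. ((\<lambda>p. cond_prob_S 6 p {r. adv_hat 6 r i < adv p r i}) has_integral I) {0..1/2} \<and> (63/100::real) < I / (1/2)"
proof -
  have ck: "chk 6 4 1000000 4 [395746, 484294, 566844, 642584, 349397, 427865, 507631, 586224]"
    by (simp add: nu_def de_def bn_def atLeastLessThan_nat_numeral chs)
  have "\<exists>I. ((\<lambda>p. cond_prob_S 6 p {r. adv_hat 6 r i < adv p r i}) has_integral I) {0..real 12 / real (6 * 4)} \<and>
     (real 4 + real (sum_list [395746, 484294, 566844, 642584, 349397, 427865, 507631, 586224]) / real 1000000) / real (6 * 4) \<le> I"
    by (rule main_lower[OF _ _ _ _ _ _ _ ck]) (use cond_lt in auto)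
  then obtain I where I: "((\<lambda>p. cond_prob_S 6 p {r. adv_hat 6 r i < adv p r i}) has_integral I) {0..real 12 / real (6 * 4)}"
     "(real 4 + real (sum_list [395746, 484294, 566844, 642584, 349397, 427865, 507631, 586224]) / real 1000000) / real (6 * 4) \<le> I" by blast
  have e: "real 12 / real (6 * 4) = (1/2::real)" by simp
  have "(63/100::real) < ((real 4 + real (sum_list [395746, 484294, 566844, 642584, 349397, 427865, 507631, 586224]) / real 1000000) / real (6 * 4)) / (1/2)" by simp
  also have "\<dots> \<le> I / (1/2)" by (rule divide_right_mono[OF I(2)]) simp
  finally show ?thesis using I(1) unfolding e by blast
qed

lemma case_6_quarter: "\<exists>I. ((\<lambda>p. cond_prob_S 6 p {r. adv_hat 6 r i < adv p r i}) has_integral I) {0..1/4} \<and> (78/100::real) < I / (1/4)"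
proof -
  have ck: "chk 6 4 1000000 4 [395746, 484294]"
    by (simp add: nu_def de_def bn_def atLeastLessThan_nat_numeral chs)
  have "\<exists>I. ((\<lambda>p. cond_prob_S 6 p {r. adv_hat 6 r i < adv p r i}) has_integral I) {0..real 6 / real (6 * 4)} \<and>
     (real 4 + real (sum_list [395746, 484294]) / real 1000000) / real (6 * 4) \<le> I"
    by (rule main_lower[OF _ _ _ _ _ _ _ ck]) (use cond_lt in auto)
  then obtain I where I: "((\<lambda>p. cond_prob_S 6 p {r. adv_hat 6 r i < adv p r i}) has_integral I) {0..real 6 / real (6 * 4)}"
     "(real 4 + real (sum_list [395746, 484294]) / real 1000000) / real (6 * 4) \<le> I" by blast
  have e: "real 6 / real (6 * 4) = (1/4::real)" by simp
  have "(78/100::real) < ((real 4 + real (sum_list [395746, 484294]) / real 1000000) / real (6 * 4)) / (1/4)" by simp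
  also have "\<dots> \<le> I / (1/4)" by (rule divide_right_mono[OF I(2)]) simp
  finally show ?thesis using I(1) unfolding e by blast
qed

lemma case_7_half: "\<exists>I. ((\<lambda>p. cond_prob_S 7 p {r. adv_hat 7 r i < adv p r i}) has_integral I) {0..1/2} \<and> (63/100::real) < I / (1/2)"
proof -
  have ck: "chk 7 8 1000000 8 [399211, 443581, 486395, 527569, 567027, 604701, 640532, 674474, 354278, 392054, 430238, 468549, 506713, 544460, 581535, 617695, 352186, 388169, 424979, 462348]"
    by (simp add: nu_def de_def bn_def atLeastLessThan_nat_numeral chs)
  have "\<exists>I. ((\<lambda>p. cond_prob_S 7 p {r. adv_hat 7 r i < adv p r i}) has_integral I) {0..real 28 / real (7 * 8)} \<and>
     (real 8 + real (sum_list [399211, 443581, 486395, 527569, 567027, 604701, 640532, 674474, 354278, 392054, 430238, 468549, 506713, 544460, 581535, 617695, 352186, 388169, 424979, 462348]) / real 1000000) / real (7 * 8) \<le> I"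
    by (rule main_lower[OF _ _ _ _ _ _ _ ck]) (use cond_lt in auto)
  then obtain I where I: "((\<lambda>p. cond_prob_S 7 p {r. adv_hat 7 r i < adv p r i}) has_integral I) {0..real 28 / real (7 * 8)}"
     "(real 8 + real (sum_list [399211, 443581, 486395, 527569, 567027, 604701, 640532, 674474, 354278, 392054, 430238, 468549, 506713, 544460, 581535, 617695, 352186, 388169, 424979, 462348]) / real 1000000) / real (7 * 8) \<le> I" by blast
  have e: "real 28 / real (7 * 8) = (1/2::real)" by simp
  have "(63/100::real) < ((real 8 + real (sum_list [399211, 443581, 486395, 527569, 567027, 604701, 640532, 674474, 354278, 392054, 430238, 468549, 506713, 544460, 581535, 617695, 352186, 388169, 424979, 462348]) / real 1000000) / real (7 * 8)) / (1/2)" by simp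
  also have "\<dots> \<le> I / (1/2)" by (rule divide_right_mono[OF I(2)]) simp
  finally show ?thesis using I(1) unfolding e by blast
qed

lemma case_7_quarter: "\<exists>I. ((\<lambda>p. cond_prob_S 7 p {r. adv_hat 7 r i < adv p r i}) has_integral I) {0..1/4} \<and> (78/100::real) < I / (1/4)"
proof -
  have ck: "chk 7 8 1000000 8 [399211, 443581, 486395, 527569, 567027, 604701]"
    by (simp add: nu_def de_def bn_def atLeastLessThan_nat_numeral chs)
  have "\<exists>I. ((\<lambda>p. cond_prob_S 7 p {r. adv_hat 7 r i < adv p r i}) has_integral I) {0..real 14 / real (7 * 8)} \<and>
     (real 8 + real (sum_list [399211, 443581, 486395, 527569, 567027, 604701]) / real 1000000) / real (7 * 8) \<le> I"
    by (rule main_lower[OF _ _ _ _ _ _ _ ck]) (use cond_lt in auto)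
  then obtain I where I: "((\<lambda>p. cond_prob_S 7 p {r. adv_hat 7 r i < adv p r i}) has_integral I) {0..real 14 / real (7 * 8)}"
     "(real 8 + real (sum_list [399211, 443581, 486395, 527569, 567027, 604701]) / real 1000000) / real (7 * 8) \<le> I" by blast
  have e: "real 14 / real (7 * 8) = (1/4::real)" by simp
  have "(78/100::real) < ((real 8 + real (sum_list [399211, 443581, 486395, 527569, 567027, 604701]) / real 1000000) / real (7 * 8)) / (1/4)" by simp
  also have "\<dots> \<le> I / (1/4)" by (rule divide_right_mono[OF I(2)]) simp
  finally show ?thesis using I(1) unfolding e by blast
qed

lemma case_8_half: "\<exists>I. ((\<lambda>p. cond_prob_S 8 p {r. adv_hat 8 r i < adv p r i}) has_integral I) {0..1/2} \<and> (63/100::real) < I / (1/2)"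
proof -
  have ck: "chk 8 16 1000000 16 [401734, 423903, 445662, 467002, 487916, 508395, 528433, 548021, 567155, 585829, 604037, 621776, 639042, 655832, 672144, 687975, 357208, 375584, 394053, 412584, 431142, 449698, 468218, 486672, 505031, 523264, 541344, 559244, 576936, 594395, 611599, 628523, 356686, 373923, 391346, 408924, 426628, 444427, 462290, 480187, 498088, 515960, 533774, 551500, 569108, 586569, 603856, 620940]"
    by (simp add: nu_def de_def bn_def atLeastLessThan_nat_numeral chs)
  have "\<exists>I. ((\<lambda>p. cond_prob_S 8 p {r. adv_hat 8 r i < adv p r i}) has_integral I) {0..real 64 / real (8 * 16)} \<and>
     (real 16 + real (sum_list [401734, 423903, 445662, 467002, 487916, 508395, 528433, 548021, 567155, 585829, 604037, 621776, 639042, 655832, 672144, 687975, 357208, 375584, 394053, 412584, 431142, 449698, 468218, 486672, 505031, 523264, 541344, 559244, 576936, 594395, 611599, 628523, 356686, 373923, 391346, 408924, 426628, 444427, 462290, 480187, 498088, 515960, 533774, 551500, 569108, 586569, 603856, 620940]) / real 1000000) / real (8 * 16) \<le> I"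
    by (rule main_lower[OF _ _ _ _ _ _ _ ck]) (use cond_lt in auto)
  then obtain I where I: "((\<lambda>p. cond_prob_S 8 p {r. adv_hat 8 r i < adv p r i}) has_integral I) {0..real 64 / real (8 * 16)}"
     "(real 16 + real (sum_list [401734, 423903, 445662, 467002, 487916, 508395, 528433, 548021, 567155, 585829, 604037, 621776, 639042, 655832, 672144, 687975, 357208, 375584, 394053, 412584, 431142, 449698, 468218, 486672, 505031, 523264, 541344, 559244, 576936, 594395, 611599, 628523, 356686, 373923, 391346, 408924, 426628, 444427, 462290, 480187, 498088, 515960, 533774, 551500, 569108, 586569, 603856, 620940]) / real 1000000) / real (8 * 16) \<le> I" by blast
  have e: "real 64 / real (8 * 16) = (1/2::real)" by simp
  have "(63/100::real) < ((real 16 + real (sum_list [401734, 423903, 445662, 467002, 487916, 508395, 528433, 548021, 567155, 585829, 604037, 621776, 639042, 655832, 672144, 687975, 357208, 375584, 394053, 412584, 431142, 449698, 468218, 486672, 505031, 523264, 541344, 559244, 576936, 594395, 611599, 628523, 356686, 373923, 391346, 408924, 426628, 444427, 462290, 480187, 498088, 515960, 533774, 551500, 569108, 586569, 603856, 620940]) / real 1000000) / real (8 * 16)) / (1/2)" by simp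
  also have "\<dots> \<le> I / (1/2)" by (rule divide_right_mono[OF I(2)]) simp
  finally show ?thesis using I(1) unfolding e by blast
qed

lemma case_8_quarter: "\<exists>I. ((\<lambda>p. cond_prob_S 8 p {r. adv_hat 8 r i < adv p r i}) has_integral I) {0..1/4} \<and> (78/100::real) < I / (1/4)"
proof -
  have ck: "chk 8 100 1000000 100 [401734, 405308, 408872, 412426, 415969, 419501, 423024, 426536, 430037, 433528, 437008, 440477, 443936, 447384, 450822, 454248, 457664, 461069, 464464, 467847, 471219, 474581, 477931, 481270, 484599, 487916, 491222, 494517, 497801, 501073, 504334, 507584, 510823, 514050, 517266, 520471, 523664, 526846, 530016, 533175, 536322, 539458, 542582, 545695, 548795, 551885, 554962, 558028, 561082, 564125, 567155, 570174, 573181, 576176, 579160, 582131, 585091, 588039, 590974, 593898, 596810, 599710, 602598, 605474, 608338, 611190, 614029, 616857, 619673, 622476, 625268, 628047, 630814, 633569, 636312, 639042, 641761, 644467, 647161, 649843, 652512, 655170, 657815, 660448, 663068, 665677, 668273, 670856, 673428, 675987, 678534, 681069, 683591, 686101, 688599, 691084, 693557, 696018, 698466, 700903]"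
    by (simp add: nu_def de_def bn_def atLeastLessThan_nat_numeral chs)
  have "\<exists>I. ((\<lambda>p. cond_prob_S 8 p {r. adv_hat 8 r i < adv p r i}) has_integral I) {0..real 200 / real (8 * 100)} \<and>
     (real 100 + real (sum_list [401734, 405308, 408872, 412426, 415969, 419501, 423024, 426536, 430037, 433528, 437008, 440477, 443936, 447384, 450822, 454248, 457664, 461069, 464464, 467847, 471219, 474581, 477931, 481270, 484599, 487916, 491222, 494517, 497801, 501073, 504334, 507584, 510823, 514050, 517266, 520471, 523664, 526846, 530016, 533175, 536322, 539458, 542582, 545695, 548795, 551885, 554962, 558028, 561082, 564125, 567155, 570174, 573181, 576176, 579160, 582131, 585091, 588039, 590974, 593898, 596810, 599710, 602598, 605474, 608338, 611190, 614029, 616857, 619673, 622476, 625268, 628047, 630814, 633569, 636312, 639042, 641761, 644467, 647161, 649843, 652512, 655170, 657815, 660448, 663068, 665677, 668273, 670856, 673428, 675987, 678534, 681069, 683591, 686101, 688599, 691084, 693557, 696018, 698466, 700903]) / real 1000000) / real (8 * 100) \<le> I"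
    by (rule main_lower[OF _ _ _ _ _ _ _ ck]) (use cond_lt in auto)
  then obtain I where I: "((\<lambda>p. cond_prob_S 8 p {r. adv_hat 8 r i < adv p r i}) has_integral I) {0..real 200 / real (8 * 100)}"
     "(real 100 + real (sum_list [401734, 405308, 408872, 412426, 415969, 419501, 423024, 426536, 430037, 433528, 437008, 440477, 443936, 447384, 450822, 454248, 457664, 461069, 464464, 467847, 471219, 474581, 477931, 481270, 484599, 487916, 491222, 494517, 497801, 501073, 504334, 507584, 510823, 514050, 517266, 520471, 523664, 526846, 530016, 533175, 536322, 539458, 542582, 545695, 548795, 551885, 554962, 558028, 561082, 564125, 567155, 570174, 573181, 576176, 579160, 582131, 585091, 588039, 590974, 593898, 596810, 599710, 602598, 605474, 608338, 611190, 614029, 616857, 619673, 622476, 625268, 628047, 630814, 633569, 636312, 639042, 641761, 644467, 647161, 649843, 652512, 655170, 657815, 660448, 663068, 665677, 668273, 670856, 673428, 675987, 678534, 681069, 683591, 686101, 688599, 691084, 693557, 696018, 698466, 700903]) / real 1000000) / real (8 * 100) \<le> I" by blast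
  have e: "real 200 / real (8 * 100) = (1/4::real)" by simp
  have "(78/100::real) < ((real 100 + real (sum_list [401734, 405308, 408872, 412426, 415969, 419501, 423024, 426536, 430037, 433528, 437008, 440477, 443936, 447384, 450822, 454248, 457664, 461069, 464464, 467847, 471219, 474581, 477931, 481270, 484599, 487916, 491222, 494517, 497801, 501073, 504334, 507584, 510823, 514050, 517266, 520471, 523664, 526846, 530016, 533175, 536322, 539458, 542582, 545695, 548795, 551885, 554962, 558028, 561082, 564125, 567155, 570174, 573181, 576176, 579160, 582131, 585091, 588039, 590974, 593898, 596810, 599710, 602598, 605474, 608338, 611190, 614029, 616857, 619673, 622476, 625268, 628047, 630814, 633569, 636312, 639042, 641761, 644467, 647161, 649843, 652512, 655170, 657815, 660448, 663068, 665677, 668273, 670856, 673428, 675987, 678534, 681069, 683591, 686101, 688599, 691084, 693557, 696018, 698466, 700903]) / real 1000000) / real (8 * 100)) / (1/4)" by simp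
  also have "\<dots> \<le> I / (1/4)" by (rule divide_right_mono[OF I(2)]) simp
  finally show ?thesis using I(1) unfolding e by blast
qed



lemma sides:
  fixes T I :: real
  assumes G: "2 \<le> G" and T: "0 < T" "T \<le> 1/2"
    and h: "((\<lambda>p. cond_prob_S G p {r. adv_hat G r i < adv p r i}) has_integral I) {0..T}"
  shows "avg_over 0 T (\<lambda>p. cond_prob_S G p {r. adv_hat G r i < adv p r i}) = I / T"
    "avg_over (1 - T) 1 (\<lambda>p. cond_prob_S G p {r. adv_hat G r i > adv p r i}) = I / T"
proof -
  show "avg_over 0 T (\<lambda>p. cond_prob_S G p {r. adv_hat G r i < adv p r i}) = I / T"
    unfolding avg_over_def using integral_unique[OF h] by simp
  have r: "((\<lambda>x. cond_prob_S G (1 - x) {r. adv_hat G r i < adv (1 - x) r i}) has_integral I) {1 - T..1}"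
    using reflect01[OF h] T by simp
  have "((\<lambda>p. cond_prob_S G p {r. adv_hat G r i > adv p r i}) has_integral I) {1 - T..1}"
  proof (rule has_integral_spike_finite[OF _ _ r, of "{1}"])
    fix x assume x: "x \<in> {1 - T..1} - {1}"
    then have x0: "0 < x" "x < 1" using T by auto
    have "cond_prob_S G x {r. adv_hat G r i > adv x r i} = cfg G x" using cond_gt x0 G by simp
    also have "\<dots> = cfl G (1 - x)" using sym x0 G by simp
    also have "\<dots> = cond_prob_S G (1 - x) {r. adv_hat G r i < adv (1 - x) r i}"
      using cond_lt[of "1 - x" G i] x0 G by simp
    finally show "cond_prob_S G x {r. adv_hat G r i > adv x r i} =
        cond_prob_S G (1 - x) {r. adv_hat G r i < adv (1 - x) r i}" .
  qed auto
  then have "integral {1 - T..1} (\<lambda>p. cond_prob_S G p {r. adv_hat G r i > adv p r i}) = I"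
    by (rule integral_unique)
  then show "avg_over (1 - T) 1 (\<lambda>p. cond_prob_S G p {r. adv_hat G r i > adv p r i}) = I / T"
    unfolding avg_over_def by simp
qed

lemma final_G:
  assumes G: "2 \<le> G" "G \<le> 8"
    and h1: "\<exists>I. ((\<lambda>p. cond_prob_S G p {r. adv_hat G r i < adv p r i}) has_integral I) {0..1/2} \<and> (63/100::real) < I / (1/2)"
    and h2: "\<exists>I. ((\<lambda>p. cond_prob_S G p {r. adv_hat G r i < adv p r i}) has_integral I) {0..1/4} \<and> (78/100::real) < I / (1/4)"
  shows "(avg_over 0 (1/2) (\<lambda>p. cond_prob_S G p {r. adv_hat G r i < adv p r i}) > 0.63) \<and>
    (avg_over (1/2) 1 (\<lambda>p. cond_prob_S G p {r. adv_hat G r i > adv p r i}) > 0.63) \<and>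
    (avg_over 0 (1/4) (\<lambda>p. cond_prob_S G p {r. adv_hat G r i < adv p r i}) > 0.78) \<and>
    (avg_over (3/4) 1 (\<lambda>p. cond_prob_S G p {r. adv_hat G r i > adv p r i}) > 0.78) \<and>
    (avg_over 0 (1/8) (\<lambda>p. cond_prob_S G p {r. adv_hat G r i < adv p r i}) = 1) \<and>
    (avg_over (7/8) 1 (\<lambda>p. cond_prob_S G p {r. adv_hat G r i > adv p r i}) = 1)"
proof -
  obtain I1 where I1: "((\<lambda>p. cond_prob_S G p {r. adv_hat G r i < adv p r i}) has_integral I1) {0..1/2}"
    "(63/100::real) < I1 / (1/2)" using h1 by blast
  obtain I2 where I2: "((\<lambda>p. cond_prob_S G p {r. adv_hat G r i < adv p r i}) has_integral I2) {0..1/4}"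
    "(78/100::real) < I2 / (1/4)" using h2 by blast
  have I3: "((\<lambda>p. cond_prob_S G p {r. adv_hat G r i < adv p r i}) has_integral (1/8 - 0)) {0..1/8}"
  proof (rule cell_0[OF G(1)])
    show "1 / 8 * real G \<le> 1" using G by simp
  qed (use cond_lt G in auto)
  note a1 = sides[OF G(1) _ _ I1(1)] and a2 = sides[OF G(1) _ _ I2(1)] and a3 = sides[OF G(1) _ _ I3]
  have e: "1 - (1/2::real) = 1/2" "1 - (1/4::real) = 3/4" "1 - (1/8::real) = 7/8" by simp_all
  show ?thesis using a1 a2 a3 I1(2) I2(2) unfolding e by simp
qed

theorem corollary1:
  fixes G i :: nat
  assumes "2 \<le> G" and "G \<le> 8" and "i < G"
  shows "(avg_over 0 (1/2) (\<lambda>p. cond_prob_S G p {r. adv_hat G r i < adv p r i}) > 0.63) \<and>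
    (avg_over (1/2) 1 (\<lambda>p. cond_prob_S G p {r. adv_hat G r i > adv p r i}) > 0.63) \<and>
    (avg_over 0 (1/4) (\<lambda>p. cond_prob_S G p {r. adv_hat G r i < adv p r i}) > 0.78) \<and>
    (avg_over (3/4) 1 (\<lambda>p. cond_prob_S G p {r. adv_hat G r i > adv p r i}) > 0.78) \<and>
    (avg_over 0 (1/8) (\<lambda>p. cond_prob_S G p {r. adv_hat G r i < adv p r i}) = 1) \<and>
    (avg_over (7/8) 1 (\<lambda>p. cond_prob_S G p {r. adv_hat G r i > adv p r i}) = 1)"
proof -
  have "G = 2 \<or> G = 3 \<or> G = 4 \<or> G = 5 \<or> G = 6 \<or> G = 7 \<or> G = 8" using assms by linarith
  then show ?thesis
  proof (elim disjE)
    assume "G = 2"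
    then show ?thesis by (simp only:) (rule final_G[OF _ _ case_2_half case_2_quarter]; simp)
  next
    assume "G = 3"
    then show ?thesis by (simp only:) (rule final_G[OF _ _ case_3_half case_3_quarter]; simp)
  next
    assume "G = 4"
    then show ?thesis by (simp only:) (rule final_G[OF _ _ case_4_half case_4_quarter]; simp)
  next
    assume "G = 5"
    then show ?thesis by (simp only:) (rule final_G[OF _ _ case_5_half case_5_quarter]; simp)
  next
    assume "G = 6"
    then show ?thesis by (simp only:) (rule final_G[OF _ _ case_6_half case_6_quarter]; simp)
  next
    assume "G = 7"
    then show ?thesis by (simp only:) (rule final_G[OF _ _ case_7_half case_7_quarter]; simp)
  next
    assume "G = 8"
    then show ?thesis by (simp only:) (rule final_G[OF _ _ case_8_half case_8_quarter]; simp)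
  qed
qed

end
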